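(* Let $\Delta t,\Delta h>0$ satisfy $1-\frac{m\,\Delta t}{\Delta h}\log(1/\epsilon)\ge0$. Define, for real numbers $V_0,V_1,\dots,V_m$, $$G(V_0,V_1,\dots,V_m)=V_0-\Delta t\,\tilde H\Big(\Big(\tfrac{V_j-V_0}{\Delta h}\Big)_{j\in[m]}\Big).$$ Then $G$ is non-decreasing in each of its arguments $V_0,V_1,\dots,V_m$. (Consequently the scheme $V^{n+1}_{\mathbf i}=V^n_{\mathbf i}-\Delta t\,\tilde H\big(((V^n_{\mathbf i+e_j}-V^n_{\mathbf i})/\Delta h)_{j\in[m]}\big)$ on a grid of multi-indices $\mathbf i\in\mathbb Z^m$ is monotone.)
   Context: $\mathcal X$ finite, $\Delta_{\mathcal X}$ the distributions on $\mathcal X$, $\Delta_K$ the simplex on $[K]$, $D$ the KL divergence; $m\ge2$ bandits $\nu^1,\dots,\nu^m$, $\nu^i=(\nu^i_a)_{a\in[K]}$, with $\nu^i_a(x)\ge\epsilon$ for all $i,a,x$, $\epsilon\in(0,1)$. $H(p)=\min_{Q\in(\Delta_{\mathcal X})^K}\max_{w\in\Delta_K}\sum_{i=1}^m\sum_aw(a)D(Q_a\|\nu^i_a)p_i$ for $p\in\mathbb R^m$, and $\tilde H(p)=-H(p)$ (the Hamiltonian of the time-reversed equation). $e_j$ denotes the $j$-th unit multi-index. *)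

theory Defs
  imports "HOL-Analysis.Analysis"
begin

definition distr :: "('x::finite \<Rightarrow> real) set" where
  "distr = {q. (\<forall>x. 0 \<le> q x) \<and> (\<Sum>x\<in>UNIV. q x) = 1}"

definition KL :: "('x::finite \<Rightarrow> real) \<Rightarrow> ('x \<Rightarrow> real) \<Rightarrow> real" where
  "KL q r = (\<Sum>x\<in>UNIV. if q x = 0 then 0 else q x * ln (q x / r x))"

text \<open>Bandits are indexed 0..m-1,
  arms by the finite type 'a, outcomes by the finite type 'x.\<close>
definition Ham :: "nat \<Rightarrow> (nat \<Rightarrow> 'a::finite \<Rightarrow> 'x::finite \<Rightarrow> real) \<Rightarrow> (nat \<Rightarrow> real) \<Rightarrow> real" where
  "Ham m \<nu> p = (INF Q \<in> {Q :: 'a \<Rightarrow> 'x \<Rightarrow> real. \<forall>a. Q a \<in> distr}.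
      SUP w \<in> (distr :: ('a \<Rightarrow> real) set).
        (\<Sum>i<m. \<Sum>a\<in>UNIV. w a * KL (Q a) (\<nu> i a) * p i))"

definition Ham_tilde :: "nat \<Rightarrow> (nat \<Rightarrow> 'a::finite \<Rightarrow> 'x::finite \<Rightarrow> real) \<Rightarrow> (nat \<Rightarrow> real) \<Rightarrow> real" where
  "Ham_tilde m \<nu> p = - Ham m \<nu> p"

text \<open>The scheme map G(V_0, V_1..V_m); V j for j<m stands for V_{j+1}.\<close>
definition Gmap :: "real \<Rightarrow> real \<Rightarrow> nat \<Rightarrow> (nat \<Rightarrow> 'a::finite \<Rightarrow> 'x::finite \<Rightarrow> real)
    \<Rightarrow> real \<Rightarrow> (nat \<Rightarrow> real) \<Rightarrow> real" where
  "Gmap dt dh m \<nu> V0 V = V0 - dt * Ham_tilde m \<nu> (\<lambda>j. (V j - V0) / dh)"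

end

theory Submission
  imports Defs
begin

lemma infsup_le:
  fixes g1 g2 :: "'q \<Rightarrow> 'w \<Rightarrow> real"
  assumes S: "S \<noteq> {}" and W: "W \<noteq> {}"
    and b1: "\<And>Q w. Q \<in> S \<Longrightarrow> w \<in> W \<Longrightarrow> \<bar>g1 Q w\<bar> \<le> B"
    and b2: "\<And>Q w. Q \<in> S \<Longrightarrow> w \<in> W \<Longrightarrow> \<bar>g2 Q w\<bar> \<le> B"
    and le: "\<And>Q w. Q \<in> S \<Longrightarrow> w \<in> W \<Longrightarrow> g1 Q w \<le> g2 Q w + c"
  shows "(INF Q\<in>S. SUP w\<in>W. g1 Q w) \<le> (INF Q\<in>S. SUP w\<in>W. g2 Q w) + c"
proof -
  have bdd2: "bdd_above (g2 Q ` W)" if "Q \<in> S" for Q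
    using b2[OF that] by (auto intro!: bdd_aboveI[where M=B] simp: abs_le_iff)
  have bdd1: "bdd_above (g1 Q ` W)" if "Q \<in> S" for Q
    using b1[OF that] by (auto intro!: bdd_aboveI[where M=B] simp: abs_le_iff)
  obtain w0 where w0: "w0 \<in> W" using W by auto
  have sup_le: "(SUP w\<in>W. g1 Q w) \<le> (SUP w\<in>W. g2 Q w) + c" if Q: "Q \<in> S" for Q
  proof (rule cSUP_least[OF W])
    fix w assume w: "w \<in> W"
    have "g2 Q w \<le> (SUP w\<in>W. g2 Q w)" by (rule cSUP_upper[OF w bdd2[OF Q]])
    then show "g1 Q w \<le> (SUP w\<in>W. g2 Q w) + c" using le[OF Q w] by linarith
  qed
  have lb1: "-B \<le> (SUP w\<in>W. g1 Q w)" if Q: "Q \<in> S" for Q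
  proof -
    have "g1 Q w0 \<le> (SUP w\<in>W. g1 Q w)" by (rule cSUP_upper[OF w0 bdd1[OF Q]])
    moreover have "-B \<le> g1 Q w0" using b1[OF Q w0] by (simp add: abs_le_iff)
    ultimately show ?thesis by linarith
  qed
  have bddb: "bdd_below ((\<lambda>Q. SUP w\<in>W. g1 Q w) ` S)"
    using lb1 by (auto intro!: bdd_belowI[where m="-B"])
  have "(INF Q\<in>S. SUP w\<in>W. g1 Q w) - c \<le> (INF Q\<in>S. SUP w\<in>W. g2 Q w)"
  proof (rule cINF_greatest[OF S])
    fix Q assume Q: "Q \<in> S"
    have "(INF Q\<in>S. SUP w\<in>W. g1 Q w) \<le> (SUP w\<in>W. g1 Q w)"
      by (rule cINF_lower[OF bddb Q])
    then show "(INF Q\<in>S. SUP w\<in>W. g1 Q w) - c \<le> (SUP w\<in>W. g2 Q w)"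
      using sup_le[OF Q] by linarith
  qed
  then show ?thesis by linarith
qed

lemma distr_nonempty: "(distr :: ('x::finite \<Rightarrow> real) set) \<noteq> {}"
proof -
  have "(\<lambda>_::'x. 1 / real CARD('x)) \<in> distr"
    by (simp add: distr_def)
  then show ?thesis by auto
qed

lemma distr_le1:
  assumes "q \<in> (distr :: ('x::finite \<Rightarrow> real) set)"
  shows "q x \<le> 1"
proof -
  have nn: "\<forall>y. 0 \<le> q y" and s: "(\<Sum>y\<in>UNIV. q y) = 1" using assms by (auto simp: distr_def)
  have "q x \<le> (\<Sum>y\<in>UNIV. q y)"
    by (rule member_le_sum) (use nn in auto)
  then show ?thesis using s by simp
qed

lemma KL_nonneg:
  assumes q: "q \<in> (distr :: ('x::finite \<Rightarrow> real) set)" and r: "r \<in> distr"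
    and rpos: "\<And>x. r x > 0"
  shows "0 \<le> KL q r"
proof -
  have qn: "\<And>x. 0 \<le> q x" and qs: "(\<Sum>x\<in>UNIV. q x) = 1" using q by (auto simp: distr_def)
  have rs: "(\<Sum>x\<in>UNIV. r x) = 1" using r by (auto simp: distr_def)
  have trm: "q x - r x \<le> (if q x = 0 then 0 else q x * ln (q x / r x))" for x
  proof (cases "q x = 0")
    case True then show ?thesis using rpos[of x] by simp
  next
    case False
    then have qp: "q x > 0" using qn[of x] by simp
    have "ln (r x / q x) \<le> r x / q x - 1"
      by (rule ln_le_minus_one) (use qp rpos[of x] in simp)
    moreover have "ln (q x / r x) = - ln (r x / q x)"
      using qp rpos[of x] by (simp add: ln_div)
    ultimately have "q x * ln (q x / r x) \<ge> q x * (1 - r x / q x)"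
      using qp by (intro mult_left_mono) auto
    moreover have "q x * (1 - r x / q x) = q x - r x" using qp by (simp add: field_simps)
    ultimately show ?thesis using False by simp
  qed
  have "(\<Sum>x\<in>UNIV. q x - r x) \<le> KL q r"
    unfolding KL_def by (rule sum_mono) (rule trm)
  then show ?thesis using qs rs by (simp add: sum_subtractf)
qed

lemma KL_upper:
  assumes q: "q \<in> (distr :: ('x::finite \<Rightarrow> real) set)"
    and eps: "0 < \<epsilon>" and rlb: "\<And>x. r x \<ge> \<epsilon>"
  shows "KL q r \<le> ln (1 / \<epsilon>)"
proof -
  have qn: "\<And>x. 0 \<le> q x" and qs: "(\<Sum>x\<in>UNIV. q x) = 1" using q by (auto simp: distr_def)
  have trm: "(if q x = 0 then 0 else q x * ln (q x / r x)) \<le> q x * ln (1 / \<epsilon>)" for x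
  proof (cases "q x = 0")
    case True then show ?thesis by simp
  next
    case False
    then have qp: "q x > 0" using qn[of x] by simp
    have rp: "r x > 0" using rlb[of x] eps by linarith
    have "q x / r x \<le> 1 / \<epsilon>"
      using distr_le1[OF q, of x] rlb[of x] eps qp rp
      by (simp add: divide_simps) (metis mult_left_le mult.commute order_trans less_imp_le rp mult_right_mono)
    then have "ln (q x / r x) \<le> ln (1 / \<epsilon>)"
      using qp rp eps by (subst ln_le_cancel_iff) auto
    then show ?thesis using False qp by (simp add: mult_left_mono)
  qed
  have "KL q r \<le> (\<Sum>x\<in>UNIV. q x * ln (1 / \<epsilon>))"
    unfolding KL_def by (rule sum_mono) (rule trm)
  also have "\<dots> = ln (1 / \<epsilon>)" using qs by (simp add: sum_distrib_right[symmetric])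
  finally show ?thesis .
qed


lemma Ham_le:
  fixes \<nu> :: "nat \<Rightarrow> 'a::finite \<Rightarrow> 'x::finite \<Rightarrow> real"
  assumes eps: "0 < \<epsilon>" "\<epsilon> < 1"
    and nu_distr: "\<And>i a. i < m \<Longrightarrow> \<nu> i a \<in> distr"
    and nu_lb: "\<And>i a x. i < m \<Longrightarrow> \<nu> i a x \<ge> \<epsilon>"
    and pp: "\<And>i. i < m \<Longrightarrow> p i \<le> p' i + d"
    and d: "0 \<le> d"
  shows "Ham m \<nu> p \<le> Ham m \<nu> p' + d * (real m * ln (1 / \<epsilon>))"
proof -
  define L where "L = ln (1 / \<epsilon>)"
  define S where "S = {Q :: 'a \<Rightarrow> 'x \<Rightarrow> real. \<forall>a. Q a \<in> distr}"
  define k where "k Q w i = (\<Sum>a\<in>UNIV. w a * KL (Q a) (\<nu> i a))" for Q :: "'a \<Rightarrow> 'x \<Rightarrow> real" and w :: "'a \<Rightarrow> real" and i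
  have L0: "0 \<le> L" unfolding L_def using eps by simp
  have KLb: "0 \<le> KL (Q a) (\<nu> i a) \<and> KL (Q a) (\<nu> i a) \<le> L" if "Q \<in> S" "i < m" for Q a i
  proof -
    have q: "Q a \<in> distr" using that S_def by auto
    have "\<And>x. \<nu> i a x > 0" using nu_lb[OF that(2)] eps by (meson less_le_trans)
    then show ?thesis using KL_nonneg[OF q nu_distr[OF that(2)]] KL_upper[OF q eps(1) nu_lb[OF that(2)]]
      by (simp add: L_def)
  qed
  have kb: "0 \<le> k Q w i \<and> k Q w i \<le> L" if "Q \<in> S" "w \<in> distr" "i < m" for Q w i
  proof -
    have wn: "\<And>a. 0 \<le> w a" and ws: "(\<Sum>a\<in>UNIV. w a) = 1" using that(2) by (auto simp: distr_def)
    have "k Q w i \<le> (\<Sum>a\<in>UNIV. w a * L)" unfolding k_def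
      by (rule sum_mono) (use KLb[OF that(1,3)] wn in \<open>simp add: mult_left_mono\<close>)
    also have "\<dots> = L" using ws by (simp add: sum_distrib_right[symmetric])
    finally show ?thesis unfolding k_def using KLb[OF that(1,3)] wn
      by (auto intro!: sum_nonneg)
  qed
  have Peq: "(\<Sum>i<m. \<Sum>a\<in>UNIV. w a * KL (Q a) (\<nu> i a) * q i) = (\<Sum>i<m. k Q w i * q i)" for Q w q
    unfolding k_def by (simp add: sum_distrib_right)
  define B where "B = (\<Sum>i<m. L * (\<bar>p i\<bar> + \<bar>p' i\<bar>))"
  have bnd: "\<bar>\<Sum>i<m. k Q w i * q i\<bar> \<le> B" if "Q \<in> S" "w \<in> distr" "\<And>i. \<bar>q i\<bar> \<le> \<bar>p i\<bar> + \<bar>p' i\<bar>" for Q w q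
  proof -
    have "\<bar>\<Sum>i<m. k Q w i * q i\<bar> \<le> (\<Sum>i<m. \<bar>k Q w i * q i\<bar>)" by (rule sum_abs)
    also have "\<dots> \<le> B" unfolding B_def
    proof (rule sum_mono)
      fix i assume "i \<in> {..<m}"
      then have "0 \<le> k Q w i" "k Q w i \<le> L" using kb[OF that(1,2)] by auto
      then show "\<bar>k Q w i * q i\<bar> \<le> L * (\<bar>p i\<bar> + \<bar>p' i\<bar>)"
        using that(3)[of i] by (simp add: abs_mult mult_mono)
    qed
    finally show ?thesis .
  qed
  have "(INF Q\<in>S. SUP w\<in>distr. (\<Sum>i<m. k Q w i * p i))
     \<le> (INF Q\<in>S. SUP w\<in>distr. (\<Sum>i<m. k Q w i * p' i)) + d * (real m * L)"
  proof (rule infsup_le)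
    show "S \<noteq> {}" unfolding S_def using distr_nonempty by auto
    show "(distr :: ('a \<Rightarrow> real) set) \<noteq> {}" by (rule distr_nonempty)
  next
    fix Q and w :: "'a \<Rightarrow> real" assume "Q \<in> S" "w \<in> distr"
    then show "\<bar>\<Sum>i<m. k Q w i * p i\<bar> \<le> B" "\<bar>\<Sum>i<m. k Q w i * p' i\<bar> \<le> B"
      by (auto intro!: bnd)
  next
    fix Q and w :: "'a \<Rightarrow> real" assume Q: "Q \<in> S" and w: "w \<in> distr"
    have "(\<Sum>i<m. k Q w i * p i) \<le> (\<Sum>i<m. k Q w i * p' i + d * L)"
    proof (rule sum_mono)
      fix i assume "i \<in> {..<m}"
      then have i: "i < m" by simp
      have k: "0 \<le> k Q w i" "k Q w i \<le> L" using kb[OF Q w i] by auto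
      have "k Q w i * p i \<le> k Q w i * (p' i + d)" using pp[OF i] k by (simp add: mult_left_mono)
      also have "\<dots> = k Q w i * p' i + k Q w i * d" by (simp add: algebra_simps)
      also have "k Q w i * d \<le> d * L" using mult_left_mono[OF k(2) d] by (simp add: mult.commute)
      finally show "k Q w i * p i \<le> k Q w i * p' i + d * L" by simp
    qed
    also have "\<dots> = (\<Sum>i<m. k Q w i * p' i) + d * (real m * L)" by (simp add: sum.distrib)
    finally show "(\<Sum>i<m. k Q w i * p i) \<le> (\<Sum>i<m. k Q w i * p' i) + d * (real m * L)" .
  qed
  then show ?thesis unfolding Ham_def Peq S_def L_def .
qed

theorem mainTheorem9:
  fixes \<nu> :: "nat \<Rightarrow> 'a::finite \<Rightarrow> 'x::finite \<Rightarrow> real"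
    and m :: nat and \<epsilon> dt dh :: real
  assumes m2: "m \<ge> 2"
    and eps: "0 < \<epsilon>" "\<epsilon> < 1"
    and nu_distr: "\<And>i a. i < m \<Longrightarrow> \<nu> i a \<in> distr"
    and nu_lb: "\<And>i a x. i < m \<Longrightarrow> \<nu> i a x \<ge> \<epsilon>"
    and dt: "dt > 0" and dh: "dh > 0"
    and cfl: "1 - real m * dt / dh * ln (1 / \<epsilon>) \<ge> 0"
  shows "(\<forall>V0 V0' V. V0 \<le> V0' \<longrightarrow> Gmap dt dh m \<nu> V0 V \<le> Gmap dt dh m \<nu> V0' V)
       \<and> (\<forall>j<m. \<forall>V0 V y. V j \<le> y \<longrightarrow> Gmap dt dh m \<nu> V0 V \<le> Gmap dt dh m \<nu> V0 (V(j := y)))"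
proof (intro conjI allI impI)
  fix V0 V0' :: real and V :: "nat \<Rightarrow> real"
  assume le: "V0 \<le> V0'"
  define d where "d = (V0' - V0) / dh"
  have d0: "0 \<le> d" using le dh by (simp add: d_def)
  have "Ham m \<nu> (\<lambda>j. (V j - V0) / dh) \<le> Ham m \<nu> (\<lambda>j. (V j - V0') / dh) + d * (real m * ln (1 / \<epsilon>))"
    by (rule Ham_le[OF eps nu_distr nu_lb]) (use d0 dh in \<open>auto simp: d_def diff_divide_distrib\<close>)
  moreover have "dt * (d * (real m * ln (1 / \<epsilon>))) \<le> V0' - V0"
  proof -
    have "dt * (d * (real m * ln (1 / \<epsilon>))) = (V0' - V0) * (real m * dt / dh * ln (1 / \<epsilon>))"
      by (simp add: d_def)
    also have "\<dots> \<le> (V0' - V0) * 1" using cfl le by (intro mult_left_mono) auto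
    finally show ?thesis by simp
  qed
  ultimately show "Gmap dt dh m \<nu> V0 V \<le> Gmap dt dh m \<nu> V0' V"
    unfolding Gmap_def Ham_tilde_def using dt
    by (smt (verit, best) mult_left_mono distrib_left)
next
  fix j V0 y and V :: "nat \<Rightarrow> real"
  assume j: "j < m" and vy: "V j \<le> y"
  have "Ham m \<nu> (\<lambda>i. (V i - V0) / dh) \<le> Ham m \<nu> (\<lambda>i. ((V(j := y)) i - V0) / dh) + 0 * (real m * ln (1 / \<epsilon>))"
    by (rule Ham_le[OF eps nu_distr nu_lb]) (use vy dh in \<open>auto simp: divide_right_mono\<close>)
  then show "Gmap dt dh m \<nu> V0 V \<le> Gmap dt dh m \<nu> V0 (V(j := y))"
    unfolding Gmap_def Ham_tilde_def using dt by (simp add: mult_left_mono)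
qed

end
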